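(* Let $\alpha=\frac{p}{q}$ with $q\ge1$, $\gcd(p,q)=1$. Then (1) $\mathcal{F}_qR_{\theta_+}=R_0\mathcal{F}_q$; (2) $\mathcal{F}_q\Delta^{\mathrm{per}}_q=D_{q,0}\mathcal{F}_q$; (3) $\mathcal{F}_qD_{q,\theta_+}=\Delta^{\mathrm{anti}}_q\mathcal{F}_q$.
   Context: $\mathcal{V}^{\mathrm{per}}_q$ (resp. $\mathcal{V}^{\mathrm{anti}}_q$) is the $q$-dimensional space of sequences $\psi:\mathbb{Z}\to\mathbb{C}$ with $\psi_{n+q}=\psi_n$ (resp. $\psi_{n+q}=-\psi_n$). $\theta_+=\alpha/2$ if $p$ is odd and $\theta_+=(1+\alpha)/2$ if $p$ is even. For $j\in\mathbb{Z}/q\mathbb{Z}$, $e_j\in\mathcal{V}^{\mathrm{per}}_q$ is given by $(e_j)_n=1$ if $n\equiv j\pmod q$ and $0$ otherwise, and $f_j\in\mathcal{V}^{\mathrm{anti}}_q$ by $(f_j)_n=\exp(2\pi i(j\alpha+\theta_+)n)$. $\mathcal{F}_q:\mathcal{V}^{\mathrm{per}}_q\to\mathcal{V}^{\mathrm{anti}}_q$ is the linear map with $\mathcal{F}_qe_j=f_j$. $\Delta_q\psi=\mathcal{T}_1\psi+\mathcal{T}_{-1}\psi$ where $(\mathcal{T}_r\psi)_n=\psi_{n-r}$, and $\Delta^{\mathrm{per}}_q$, $\Delta^{\mathrm{anti}}_q$ are its restrictions to $\mathcal{V}^{\mathrm{per}}_q$, $\mathcal{V}^{\mathrm{anti}}_q$.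 $D_{q,\theta}$ is the diagonal operator $(D_{q,\theta}\psi)_n=2\cos(2\pi(\theta+n\alpha))\psi_n$ (here $D_{q,0}$ acts on $\mathcal{V}^{\mathrm{anti}}_q$ and $D_{q,\theta_+}$ on $\mathcal{V}^{\mathrm{per}}_q$). $R_0:(\psi_n)\mapsto(\psi_{-n})$ on $\mathcal{V}^{\mathrm{anti}}_q$ and $R_{\theta_+}:(\psi_n)\mapsto(\psi_{-1-n})$ on $\mathcal{V}^{\mathrm{per}}_q$. *)

theory Defs
  imports Complex_Main
begin

definition alpha :: "int \<Rightarrow> int \<Rightarrow> real" where
  "alpha p q = real_of_int p / real_of_int q"

definition theta_plus :: "int \<Rightarrow> int \<Rightarrow> real" where
  "theta_plus p q = (if odd p then alpha p q / 2 else (1 + alpha p q) / 2)"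

definition per_space :: "int \<Rightarrow> (int \<Rightarrow> complex) set" where
  "per_space q = {\<psi>. \<forall>n. \<psi> (n + q) = \<psi> n}"

definition anti_space :: "int \<Rightarrow> (int \<Rightarrow> complex) set" where
  "anti_space q = {\<psi>. \<forall>n. \<psi> (n + q) = - \<psi> n}"

definition e_vec :: "int \<Rightarrow> int \<Rightarrow> int \<Rightarrow> complex" where
  "e_vec q j n = (if n mod q = j mod q then 1 else 0)"

definition f_vec :: "int \<Rightarrow> int \<Rightarrow> int \<Rightarrow> int \<Rightarrow> complex" where
  "f_vec p q j n =
     exp (2 * of_real pi * \<i> * of_real (real_of_int j * alpha p q + theta_plus p q) * of_int n)"

text \<open>F_q: the linear map with F_q e_j = f_j. Since a periodic psi equals
  the sum over j in {0..<q} of psi_j e_j, F_q psi = sum of psi_j f_j.\<close>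
definition F_q :: "int \<Rightarrow> int \<Rightarrow> (int \<Rightarrow> complex) \<Rightarrow> (int \<Rightarrow> complex)" where
  "F_q p q \<psi> = (\<lambda>n. \<Sum>j\<in>{0..<q}. \<psi> j * f_vec p q j n)"

definition shiftT :: "int \<Rightarrow> (int \<Rightarrow> complex) \<Rightarrow> (int \<Rightarrow> complex)" where
  "shiftT r \<psi> = (\<lambda>n. \<psi> (n - r))"

definition Delta :: "(int \<Rightarrow> complex) \<Rightarrow> (int \<Rightarrow> complex)" where
  "Delta \<psi> = (\<lambda>n. shiftT 1 \<psi> n + shiftT (-1) \<psi> n)"

definition D_op :: "int \<Rightarrow> int \<Rightarrow> real \<Rightarrow> (int \<Rightarrow> complex) \<Rightarrow> (int \<Rightarrow> complex)" where
  "D_op p q \<theta> \<psi> = (\<lambda>n. complex_of_real (2 * cos (2 * pi * (\<theta> + real_of_int n * alpha p q))) * \<psi> n)"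

definition R_zero :: "(int \<Rightarrow> complex) \<Rightarrow> (int \<Rightarrow> complex)" where
  "R_zero \<psi> = (\<lambda>n. \<psi> (- n))"

definition R_theta :: "(int \<Rightarrow> complex) \<Rightarrow> (int \<Rightarrow> complex)" where
  "R_theta \<psi> = (\<lambda>n. \<psi> (- 1 - n))"

end

theory Submission
  imports Defs
begin

lemma fv: "f_vec p q j n = cis (2 * pi * ((real_of_int j * alpha p q + theta_plus p q) * real_of_int n))"
  unfolding f_vec_def cis_conv_exp by (simp add: algebra_simps)

lemma cis_shift: "x = y + 2 * pi * real_of_int k \<Longrightarrow> cis x = cis y"
proof -
  assume x: "x = y + 2 * pi * real_of_int k"
  have c1: "cis (2 * pi * real_of_int k) = 1" by (rule cis_multiple_2pi) simp
  have "cis x = cis y * cis (2 * pi * real_of_int k)" unfolding x by (simp only: cis_mult)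
  then show ?thesis using c1 by simp
qed

lemma cis_cos: "cis x + cis (- x) = complex_of_real (2 * cos x)"
  by (simp add: complex_eq_iff)

lemma periodic_mod:
  fixes g :: "int \<Rightarrow> complex" and q :: int
  assumes "\<And>x. g (x + q) = g x"
  shows "g (y + k * q) = g y"
proof (induction k rule: int_induct[where k=0])
  case base then show ?case by simp
next
  case (step1 i)
  have "g (y + (i + 1) * q) = g (y + i * q + q)" by (simp add: algebra_simps)
  then show ?case using assms step1 by simp
next
  case (step2 i)
  have "g (y + i * q) = g (y + (i - 1) * q + q)" by (simp add: algebra_simps)
  then show ?case using assms step2 by simp
qed

lemma periodic_modq:
  fixes g :: "int \<Rightarrow> complex" and q :: int
  assumes "\<And>x. g (x + q) = g x"
  shows "g (y mod q) = g y"
proof -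
  have "g (y mod q + (y div q) * q) = g (y mod q)" using periodic_mod[of g q "y mod q" "y div q"] assms by blast
  then show ?thesis by (simp add: mult.commute)
qed

lemma sum_reindex_mod:
  fixes g :: "int \<Rightarrow> complex" and q :: int
  assumes q: "q \<ge> 1" and per: "\<And>x. g (x + q) = g x"
    and inj: "\<And>i j. i \<in> {0..<q} \<Longrightarrow> j \<in> {0..<q} \<Longrightarrow> \<sigma> i mod q = \<sigma> j mod q \<Longrightarrow> i = j"
  shows "(\<Sum>j\<in>{0..<q}. g (\<sigma> j)) = (\<Sum>j\<in>{0..<q}. g j)"
proof -
  define h where "h = (\<lambda>j. \<sigma> j mod q)"
  have injh: "inj_on h {0..<q}" unfolding inj_on_def h_def using inj by blast
  have sub: "h ` {0..<q} \<subseteq> {0..<q}"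
  proof
    fix y assume "y \<in> h ` {0..<q}"
    then obtain x where "y = \<sigma> x mod q" unfolding h_def by blast
    then show "y \<in> {0..<q}" using q by simp
  qed
  have "h ` {0..<q} = {0..<q}" by (rule endo_inj_surj[OF _ sub injh]) simp
  then have bij: "bij_betw h {0..<q} {0..<q}" using injh by (simp add: bij_betw_def)
  have "\<And>j. g (\<sigma> j) = g (h j)" unfolding h_def using periodic_modq[of g q, OF per] by metis
  then have "(\<Sum>j\<in>{0..<q}. g (\<sigma> j)) = (\<Sum>j\<in>{0..<q}. g (h j))"
    by simp
  also have "\<dots> = (\<Sum>j\<in>{0..<q}. g j)" by (rule sum.reindex_bij_betw[OF bij])
  finally show ?thesis .
qed

lemma inj_shift: fixes q i j c :: int
  shows "i \<in> {0..<q} \<Longrightarrow> j \<in> {0..<q} \<Longrightarrow> (i + c) mod q = (j + c) mod q \<Longrightarrow> i = j"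
proof -
  assume a: "i \<in> {0..<q}" "j \<in> {0..<q}" "(i + c) mod q = (j + c) mod q"
  have "(i + c - c) mod q = (j + c - c) mod q" using a(3) by (metis mod_diff_left_eq)
  then show "i = j" using a(1,2) by simp
qed
lemma inj_refl: fixes q i j :: int
  shows "i \<in> {0..<q} \<Longrightarrow> j \<in> {0..<q} \<Longrightarrow> (-1 - i) mod q = (-1 - j) mod q \<Longrightarrow> i = j"
proof -
  assume a: "i \<in> {0..<q}" "j \<in> {0..<q}" "(-1 - i) mod q = (-1 - j) mod q"
  have "(-1 - (-1 - i)) mod q = (-1 - (-1 - j)) mod q" using a(3) by (metis mod_diff_right_eq)
  then show "i = j" using a(1,2) by simp
qed

lemma f_per:
  assumes "q \<ge> 1"
  shows "f_vec p q (j + q) n = f_vec p q j n"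
  unfolding fv
proof (rule cis_shift[where k="p * n"])
  have "real_of_int q * alpha p q = real_of_int p" using assms by (simp add: alpha_def)
  then show "2 * pi * ((real_of_int (j + q) * alpha p q + theta_plus p q) * real_of_int n) =
    2 * pi * ((real_of_int j * alpha p q + theta_plus p q) * real_of_int n) + 2 * pi * real_of_int (p * n)"
    by (simp add: algebra_simps)
qed

lemma part1:
  fixes p q :: int
  assumes "q \<ge> 1" and ps: "\<psi> \<in> per_space q"
  shows "F_q p q (R_theta \<psi>) = R_zero (F_q p q \<psi>)"
proof -
  have per: "\<And>x. \<psi> (x + q) = \<psi> x" using ps by (simp add: per_space_def)
  have q0: "real_of_int q \<noteq> 0" using assms by simp
  show ?thesis
  proof
    fix n
    let ?g = "\<lambda>j. \<psi> (-1 - j) * f_vec p q j n"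
    have gper: "\<And>x. ?g (x + q) = ?g x"
    proof -
      fix x
      have "\<psi> (-1 - (x + q)) = \<psi> (-1 - x)" using periodic_mod[of \<psi> q "-1 - (x+q)" 1, OF per] by simp
      then show "?g (x + q) = ?g x" using f_per[OF assms(1)] by simp
    qed
    have "F_q p q (R_theta \<psi>) n = (\<Sum>j\<in>{0..<q}. ?g j)"
      by (simp add: F_q_def R_theta_def)
    also have "\<dots> = (\<Sum>j\<in>{0..<q}. ?g (-1 - j))"
      by (rule sum_reindex_mod[where g="?g" and \<sigma>="\<lambda>j. -1 - j", OF assms(1) gper, symmetric]) (rule inj_refl)
    also have "\<dots> = (\<Sum>j\<in>{0..<q}. \<psi> j * f_vec p q j (-n))"
    proof (rule sum.cong[OF refl])
      fix j
      have "f_vec p q (-1 - j) n = f_vec p q j (-n)"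
        unfolding fv
      proof (rule cis_shift[where k="(if odd p then 0 else 1) * n"])
        show "2 * pi * ((real_of_int (- 1 - j) * alpha p q + theta_plus p q) * real_of_int n) =
          2 * pi * ((real_of_int j * alpha p q + theta_plus p q) * real_of_int (- n)) +
          2 * pi * real_of_int ((if odd p then 0 else 1) * n)"
          by (simp add: theta_plus_def algebra_simps)
      qed
      then show "?g (-1 - j) = \<psi> j * f_vec p q j (-n)" by simp
    qed
    also have "\<dots> = R_zero (F_q p q \<psi>) n" by (simp add: F_q_def R_zero_def)
    finally show "F_q p q (R_theta \<psi>) n = R_zero (F_q p q \<psi>) n" .
  qed
qed

lemma part2:
  fixes p q :: int
  assumes "q \<ge> 1" and ps: "\<psi> \<in> per_space q"
  shows "F_q p q (Delta \<psi>) = D_op p q 0 (F_q p q \<psi>)"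
proof -
  have per: "\<And>x. \<psi> (x + q) = \<psi> x" using ps by (simp add: per_space_def)
  show ?thesis
  proof
    fix n
    let ?g1 = "\<lambda>j. \<psi> (j - 1) * f_vec p q j n"
    let ?g2 = "\<lambda>j. \<psi> (j + 1) * f_vec p q j n"
    have g1per: "\<And>x. ?g1 (x + q) = ?g1 x"
    proof -
      fix x
      have "\<psi> (x + q - 1) = \<psi> (x - 1)" using per[of "x - 1"] by (simp add: algebra_simps)
      then show "?g1 (x + q) = ?g1 x" using f_per[OF assms(1)] by simp
    qed
    have g2per: "\<And>x. ?g2 (x + q) = ?g2 x"
    proof -
      fix x
      have "\<psi> (x + q + 1) = \<psi> (x + 1)" using per[of "x + 1"] by (simp add: algebra_simps)
      then show "?g2 (x + q) = ?g2 x" using f_per[OF assms(1)] by simp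
    qed
    have s1: "(\<Sum>j\<in>{0..<q}. ?g1 j) = (\<Sum>j\<in>{0..<q}. ?g1 (j + 1))"
      by (rule sum_reindex_mod[where g="?g1" and \<sigma>="\<lambda>j. j + 1", OF assms(1) g1per, symmetric]) (rule inj_shift)
    have s2: "(\<Sum>j\<in>{0..<q}. ?g2 j) = (\<Sum>j\<in>{0..<q}. ?g2 (j - 1))"
      by (rule sum_reindex_mod[where g="?g2" and \<sigma>="\<lambda>j. j - 1", OF assms(1) g2per, symmetric]) (simp only: diff_conv_add_uminus, rule inj_shift)
    have key: "f_vec p q (j + 1) n + f_vec p q (j - 1) n =
        complex_of_real (2 * cos (2 * pi * (0 + real_of_int n * alpha p q))) * f_vec p q j n" for j
    proof -
      let ?a = "2 * pi * ((real_of_int j * alpha p q + theta_plus p q) * real_of_int n)"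
      let ?b = "2 * pi * (0 + real_of_int n * alpha p q)"
      have e1: "f_vec p q (j + 1) n = cis ?a * cis ?b" unfolding fv cis_mult
        by (simp add: algebra_simps)
      have e2: "f_vec p q (j - 1) n = cis ?a * cis (- ?b)" unfolding fv cis_mult
        by (simp add: algebra_simps)
      have e0: "f_vec p q j n = cis ?a" by (simp add: fv)
      have e3: "cis ?a * cis ?b + cis ?a * cis (- ?b) = cis ?a * complex_of_real (2 * cos ?b)"
        by (simp only: distrib_left[symmetric] cis_cos)
      show ?thesis unfolding e1 e2 e0 by (metis e3 add.commute mult.commute)
    qed
    have "F_q p q (Delta \<psi>) n = (\<Sum>j\<in>{0..<q}. ?g1 j) + (\<Sum>j\<in>{0..<q}. ?g2 j)"
      by (simp add: F_q_def Delta_def shiftT_def algebra_simps sum.distrib)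
    also have "\<dots> = (\<Sum>j\<in>{0..<q}. \<psi> j * (f_vec p q (j + 1) n + f_vec p q (j - 1) n))"
      unfolding s1 s2 by (simp add: algebra_simps sum.distrib)
    also have "\<dots> = D_op p q 0 (F_q p q \<psi>) n"
      unfolding key D_op_def F_q_def sum_distrib_left by (rule sum.cong[OF refl]) (simp only: mult_ac)
    finally show "F_q p q (Delta \<psi>) n = D_op p q 0 (F_q p q \<psi>) n" .
  qed
qed

lemma part3:
  fixes p q :: int
  assumes "q \<ge> 1" and ps: "\<psi> \<in> per_space q"
  shows "F_q p q (D_op p q (theta_plus p q) \<psi>) = Delta (F_q p q \<psi>)"
proof -
  show ?thesis
  proof
    fix n
    have key: "complex_of_real (2 * cos (2 * pi * (theta_plus p q + real_of_int j * alpha p q))) * f_vec p q j n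
        = f_vec p q j (n - 1) + f_vec p q j (n + 1)" for j
    proof -
      let ?a = "2 * pi * ((real_of_int j * alpha p q + theta_plus p q) * real_of_int n)"
      let ?b = "2 * pi * (theta_plus p q + real_of_int j * alpha p q)"
      have e1: "f_vec p q j (n + 1) = cis ?a * cis ?b" unfolding fv cis_mult
        by (simp add: algebra_simps)
      have e2: "f_vec p q j (n - 1) = cis ?a * cis (- ?b)" unfolding fv cis_mult
        by (simp add: algebra_simps)
      have e0: "f_vec p q j n = cis ?a" by (simp add: fv)
      have e3: "cis ?a * cis ?b + cis ?a * cis (- ?b) = cis ?a * complex_of_real (2 * cos ?b)"
        by (simp only: distrib_left[symmetric] cis_cos)
      show ?thesis unfolding e1 e2 e0 by (metis e3 add.commute mult.commute)
    qed
    have "F_q p q (D_op p q (theta_plus p q) \<psi>) n = (\<Sum>j\<in>{0..<q}. \<psi> j *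
       (complex_of_real (2 * cos (2 * pi * (theta_plus p q + real_of_int j * alpha p q))) * f_vec p q j n))"
      by (simp add: F_q_def D_op_def mult_ac)
    also have "\<dots> = (\<Sum>j\<in>{0..<q}. \<psi> j * (f_vec p q j (n - 1) + f_vec p q j (n + 1)))"
      by (simp only: key)
    also have "\<dots> = Delta (F_q p q \<psi>) n"
      by (simp add: F_q_def Delta_def shiftT_def distrib_left sum.distrib)
    finally show "F_q p q (D_op p q (theta_plus p q) \<psi>) n = Delta (F_q p q \<psi>) n" .
  qed
qed

theorem lemmal:
  fixes p q :: int
  assumes "q \<ge> 1" and "coprime p q"
  shows "(\<forall>\<psi>\<in>per_space q. F_q p q (R_theta \<psi>) = R_zero (F_q p q \<psi>))
       \<and> (\<forall>\<psi>\<in>per_space q. F_q p q (Delta \<psi>) = D_op p q 0 (F_q p q \<psi>))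
       \<and> (\<forall>\<psi>\<in>per_space q. F_q p q (D_op p q (theta_plus p q) \<psi>) = Delta (F_q p q \<psi>))"
  using part1[OF assms(1)] part2[OF assms(1)] part3[OF assms(1)] by blast

end
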